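(* Let $V=\{v_\varepsilon\}_{\varepsilon\in(B,0)}\subset\mathrm{Vect}^*S^2$ be a smooth local family of vector fields. Then both $ELBS(v_0)$ and $LBS(V)$ are closed $v_0$-invariant subsets of $S^2$.
   Context: $\mathrm{Vect}^*S^2$: $C^\infty$ vector fields on $S^2$ with isolated singular points each satisfying a Lojasiewicz inequality, and finitely many cycles. A separatrix is a phase curve containing one of the two bounding curves of a hyperbolic sector of a singular point. A singular point is hyperbolic if both eigenvalues have nonzero real part. A nest is a maximal set of nested limit cycles with no singular points between them; a limit cycle is semi-stable if its Poincaré map in a suitable transversal coordinate satisfies $P(0)=0$, $P(x)>x$ for $x\ne0$. A limit cycle is non-interesting if its nest contains an attracting or repelling limit cycle, or all cycles in its nest are semi-stable and inside the innermost or outside the outermost cycle there is only one singular point, which is hyperbolic. An $\alpha$- (resp. $\omega$-) limit set of a nonsingular point is non-interesting if it is a hyperbolic repelling (resp. attracting) singular point or a non-interesting limit cycle, otherwise interesting. $ELBS(v)$ = union of non-hyperbolic singular points, non-hyperbolic limit cycles, and the closure of the set of nonsingular points whose $\alpha$- and $\omega$-limit sets are both interesting. A smooth local family $V=\{v_\varepsilon\}_{\varepsilon\in(B,0)}$ ($B\subset\mathbb R^n$ an open ball) is the germ at $\varepsilon=0$ of a smooth family; $V\subset\mathrm{Vect}^*S^2$ means every $v_\varepsilon$ lies there. $\mathrm{Sing}\,V,\mathrm{Per}\,V,\mathrm{Sep}\,V\subset B\times S^2$ are the unions over $\varepsilon$ of singular points, limit cycles, separatrices of $v_\varepsilon$;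 $\{\varepsilon=0\}\times S^2\cong S^2$. $LBS(V)=ELBS(v_0)\cap\big(\mathrm{Sing}\,v_0\cup((\overline{\mathrm{Per}\,V}\cup\overline{\mathrm{Sep}\,V})\cap\{\varepsilon=0\})\big)$. *)

theory Defs
  imports "HOL-Analysis.Analysis"
begin

type_synonym pt = "real ^ 3"

definition S2 :: "pt set" where
  "S2 = sphere 0 1"

fun Ck_on :: "nat \<Rightarrow> 'a::euclidean_space set \<Rightarrow> ('a \<Rightarrow> 'b::euclidean_space) \<Rightarrow> bool" where
  "Ck_on 0 S f = continuous_on S f"
| "Ck_on (Suc k) S f =
     (\<exists>f'. (\<forall>x\<in>S. (f has_derivative f' x) (at x)) \<and>
           (\<forall>i\<in>Basis. Ck_on k S (\<lambda>x. f' x i)))"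

definition smooth_on :: "'a::euclidean_space set \<Rightarrow> ('a \<Rightarrow> 'b::euclidean_space) \<Rightarrow> bool" where
  "smooth_on S f \<longleftrightarrow> open S \<and> (\<forall>k. Ck_on k S f)"

definition smooth_vf :: "(pt \<Rightarrow> pt) \<Rightarrow> bool" where
  "smooth_vf v \<longleftrightarrow> (\<exists>U. S2 \<subseteq> U \<and> smooth_on U v) \<and> (\<forall>x\<in>S2. v x \<bullet> x = 0)"

definition is_solution :: "(pt \<Rightarrow> pt) \<Rightarrow> (real \<Rightarrow> pt) \<Rightarrow> bool" where
  "is_solution v \<gamma> \<longleftrightarrow> (\<forall>s. \<gamma> s \<in> S2 \<and> (\<gamma> has_vector_derivative v (\<gamma> s)) (at s))"

text \<open>The (global, unique for smooth fields) flow on the compact manifold S^2.\<close>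
definition flow :: "(pt \<Rightarrow> pt) \<Rightarrow> real \<Rightarrow> pt \<Rightarrow> pt" where
  "flow v t x = (SOME \<gamma>. is_solution v \<gamma> \<and> \<gamma> 0 = x) t"

definition orbit :: "(pt \<Rightarrow> pt) \<Rightarrow> pt \<Rightarrow> pt set" where
  "orbit v x = range (\<lambda>t. flow v t x)"

definition invariant :: "(pt \<Rightarrow> pt) \<Rightarrow> pt set \<Rightarrow> bool" where
  "invariant v A \<longleftrightarrow> A \<subseteq> S2 \<and> (\<forall>x\<in>A. \<forall>t. flow v t x \<in> A)"

definition omega_limit :: "(pt \<Rightarrow> pt) \<Rightarrow> pt \<Rightarrow> pt set" where
  "omega_limit v x = {y. \<exists>ts. filterlim ts at_top sequentially \<and>
                              (\<lambda>n. flow v (ts n) x) \<longlonglongrightarrow> y}"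

definition alpha_limit :: "(pt \<Rightarrow> pt) \<Rightarrow> pt \<Rightarrow> pt set" where
  "alpha_limit v x = {y. \<exists>ts. filterlim ts at_bot sequentially \<and>
                              (\<lambda>n. flow v (ts n) x) \<longlonglongrightarrow> y}"

definition sing :: "(pt \<Rightarrow> pt) \<Rightarrow> pt set" where
  "sing v = {p\<in>S2. v p = 0}"

text \<open>a + i b is an eigenvalue of the linear map L restricted to the tangent plane
  T_p S^2 = p^perp (complex eigenvector u + i w).\<close>
definition tangent_eigenvalue :: "(pt \<Rightarrow> pt) \<Rightarrow> pt \<Rightarrow> real \<Rightarrow> real \<Rightarrow> bool" where
  "tangent_eigenvalue L p a b \<longleftrightarrow>
     (\<exists>u w. u \<bullet> p = 0 \<and> w \<bullet> p = 0 \<and> (u \<noteq> 0 \<or> w \<noteq> 0) \<and>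
            L u = a *\<^sub>R u - b *\<^sub>R w \<and> L w = b *\<^sub>R u + a *\<^sub>R w)"

definition hyp_sing :: "(pt \<Rightarrow> pt) \<Rightarrow> pt \<Rightarrow> bool" where
  "hyp_sing v p \<longleftrightarrow> p \<in> sing v \<and>
     (\<exists>L. (v has_derivative L) (at p) \<and> (\<forall>a b. tangent_eigenvalue L p a b \<longrightarrow> a \<noteq> 0))"

definition hyp_attracting_sing :: "(pt \<Rightarrow> pt) \<Rightarrow> pt \<Rightarrow> bool" where
  "hyp_attracting_sing v p \<longleftrightarrow> p \<in> sing v \<and>
     (\<exists>L. (v has_derivative L) (at p) \<and> (\<forall>a b. tangent_eigenvalue L p a b \<longrightarrow> a < 0))"

definition hyp_repelling_sing :: "(pt \<Rightarrow> pt) \<Rightarrow> pt \<Rightarrow> bool" where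
  "hyp_repelling_sing v p \<longleftrightarrow> p \<in> sing v \<and>
     (\<exists>L. (v has_derivative L) (at p) \<and> (\<forall>a b. tangent_eigenvalue L p a b \<longrightarrow> a > 0))"

definition isolated_sing :: "(pt \<Rightarrow> pt) \<Rightarrow> pt \<Rightarrow> bool" where
  "isolated_sing v p \<longleftrightarrow> (\<exists>d>0. \<forall>q\<in>sing v. dist q p < d \<longrightarrow> q = p)"

definition lojasiewicz :: "(pt \<Rightarrow> pt) \<Rightarrow> pt \<Rightarrow> bool" where
  "lojasiewicz v p \<longleftrightarrow>
     (\<exists>c>0. \<exists>N::nat. \<exists>d>0. \<forall>x\<in>S2. dist x p < d \<longrightarrow> norm (v x) \<ge> c * dist x p ^ N)"

definition cycle :: "(pt \<Rightarrow> pt) \<Rightarrow> pt set \<Rightarrow> bool" where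
  "cycle v C \<longleftrightarrow> (\<exists>x\<in>S2. v x \<noteq> 0 \<and> (\<exists>T>0. flow v T x = x) \<and> C = orbit v x)"

definition limit_cycle :: "(pt \<Rightarrow> pt) \<Rightarrow> pt set \<Rightarrow> bool" where
  "limit_cycle v C \<longleftrightarrow> cycle v C \<and>
     (\<exists>U. open U \<and> C \<subseteq> U \<and> (\<forall>C'. cycle v C' \<and> C' \<subseteq> U \<longrightarrow> C' = C))"

definition vect_star :: "(pt \<Rightarrow> pt) \<Rightarrow> bool" where
  "vect_star v \<longleftrightarrow> smooth_vf v \<and>
     (\<forall>p\<in>sing v. isolated_sing v p \<and> lojasiewicz v p) \<and>
     finite {C. cycle v C}"

definition transversal :: "(pt \<Rightarrow> pt) \<Rightarrow> (real \<Rightarrow> pt) \<Rightarrow> real \<Rightarrow> bool" where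
  "transversal v \<sigma> d \<longleftrightarrow> d > 0 \<and> smooth_on UNIV \<sigma> \<and>
     \<sigma> ` {-d<..<d} \<subseteq> S2 \<and> inj_on \<sigma> {-d<..<d} \<and>
     (\<forall>s\<in>{-d<..<d}. \<forall>a b. a *\<^sub>R vector_derivative \<sigma> (at s) + b *\<^sub>R v (\<sigma> s) = 0
                      \<longrightarrow> a = 0 \<and> b = 0)"

text \<open>P is the Poincare (first return) map on (-e,e) of the section sigma((-d,d)),
  in the transversal coordinate s.\<close>
definition return_map :: "(pt \<Rightarrow> pt) \<Rightarrow> (real \<Rightarrow> pt) \<Rightarrow> real \<Rightarrow> real \<Rightarrow> (real \<Rightarrow> real) \<Rightarrow> bool" where
  "return_map v \<sigma> d e P \<longleftrightarrow> 0 < e \<and> e \<le> d \<and> P 0 = 0 \<and>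
     (\<forall>s\<in>{-e<..<e}. P s \<in> {-d<..<d} \<and>
        (\<exists>\<tau>>0. flow v \<tau> (\<sigma> s) = \<sigma> (P s) \<and>
               (\<forall>t\<in>{0<..<\<tau>}. flow v t (\<sigma> s) \<notin> \<sigma> ` {-d<..<d})))"

definition poincare_at :: "(pt \<Rightarrow> pt) \<Rightarrow> pt set \<Rightarrow> (real \<Rightarrow> pt) \<Rightarrow> real \<Rightarrow> real \<Rightarrow> (real \<Rightarrow> real) \<Rightarrow> bool" where
  "poincare_at v C \<sigma> d e P \<longleftrightarrow> transversal v \<sigma> d \<and> \<sigma> 0 \<in> C \<and> return_map v \<sigma> d e P"

definition hyp_cycle :: "(pt \<Rightarrow> pt) \<Rightarrow> pt set \<Rightarrow> bool" where
  "hyp_cycle v C \<longleftrightarrow> (\<exists>\<sigma> d e P D. poincare_at v C \<sigma> d e P \<and>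
                              (P has_real_derivative D) (at 0) \<and> D \<noteq> 1)"

definition semistable_cycle :: "(pt \<Rightarrow> pt) \<Rightarrow> pt set \<Rightarrow> bool" where
  "semistable_cycle v C \<longleftrightarrow> (\<exists>\<sigma> d e P. poincare_at v C \<sigma> d e P \<and>
                              (\<forall>s\<in>{-e<..<e}. s \<noteq> 0 \<longrightarrow> P s > s))"

definition attracting_cycle :: "(pt \<Rightarrow> pt) \<Rightarrow> pt set \<Rightarrow> bool" where
  "attracting_cycle v C \<longleftrightarrow> limit_cycle v C \<and>
     (\<exists>U. open U \<and> C \<subseteq> U \<and> (\<forall>x\<in>U \<inter> S2. omega_limit v x = C))"

definition repelling_cycle :: "(pt \<Rightarrow> pt) \<Rightarrow> pt set \<Rightarrow> bool" where
  "repelling_cycle v C \<longleftrightarrow> limit_cycle v C \<and>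
     (\<exists>U. open U \<and> C \<subseteq> U \<and> (\<forall>x\<in>U \<inter> S2. alpha_limit v x = C))"

text \<open>The open annulus between two disjoint cycles: the union of the components of
  S^2 minus both cycles whose closure meets both of them.\<close>
definition between :: "pt set \<Rightarrow> pt set \<Rightarrow> pt set" where
  "between C1 C2 = \<Union>{K \<in> components (S2 - (C1 \<union> C2)).
                       closure K \<inter> C1 \<noteq> {} \<and> closure K \<inter> C2 \<noteq> {}}"

definition nest :: "(pt \<Rightarrow> pt) \<Rightarrow> pt set \<Rightarrow> pt set set" where
  "nest v C = {C'. limit_cycle v C' \<and> (C' = C \<or> between C C' \<inter> sing v = {})}"

definition nest_region :: "pt set set \<Rightarrow> pt set" where
  "nest_region N = \<Union>N \<union> \<Union>{between C C' |C C'. C \<in> N \<and> C' \<in> N \<and> C \<noteq> C'}"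

text \<open>The two complementary components of the nest region are the inside of the
  innermost and the outside of the outermost cycle.\<close>
definition noninteresting_cycle :: "(pt \<Rightarrow> pt) \<Rightarrow> pt set \<Rightarrow> bool" where
  "noninteresting_cycle v C \<longleftrightarrow> limit_cycle v C \<and>
     ((\<exists>C'\<in>nest v C. attracting_cycle v C' \<or> repelling_cycle v C') \<or>
      ((\<forall>C'\<in>nest v C. semistable_cycle v C') \<and>
       (\<exists>D\<in>components (S2 - nest_region (nest v C)).
           \<exists>p. D \<inter> sing v = {p} \<and> hyp_sing v p)))"

definition noninteresting_omega :: "(pt \<Rightarrow> pt) \<Rightarrow> pt \<Rightarrow> bool" where
  "noninteresting_omega v x \<longleftrightarrow>
     (\<exists>p. omega_limit v x = {p} \<and> hyp_sing v p \<and> hyp_attracting_sing v p) \<or>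
     noninteresting_cycle v (omega_limit v x)"

definition noninteresting_alpha :: "(pt \<Rightarrow> pt) \<Rightarrow> pt \<Rightarrow> bool" where
  "noninteresting_alpha v x \<longleftrightarrow>
     (\<exists>p. alpha_limit v x = {p} \<and> hyp_sing v p \<and> hyp_repelling_sing v p) \<or>
     noninteresting_cycle v (alpha_limit v x)"

definition ELBS :: "(pt \<Rightarrow> pt) \<Rightarrow> pt set" where
  "ELBS v = {p \<in> sing v. \<not> hyp_sing v p}
          \<union> \<Union>{C. limit_cycle v C \<and> \<not> hyp_cycle v C}
          \<union> closure {x \<in> S2. v x \<noteq> 0 \<and> \<not> noninteresting_alpha v x \<and> \<not> noninteresting_omega v x}"

text \<open>A hyperbolic sector of the singular point p bounded by the half-orbits
  gamma1 = {flow t x1 | t >= 0} (tending to p as t -> +oo) and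
  gamma2 = {flow t x2 | t <= 0} (tending to p as t -> -oo): a closed disk H in S^2
  whose boundary is gamma1 \<union> gamma2 \<union> {p} \<union> A, with A an arc from x1 to x2,
  such that every trajectory through H minus its bounding curves leaves H in both
  time directions.\<close>
definition hyp_sector :: "(pt \<Rightarrow> pt) \<Rightarrow> pt \<Rightarrow> pt \<Rightarrow> pt \<Rightarrow> bool" where
  "hyp_sector v p x1 x2 \<longleftrightarrow> p \<in> sing v \<and> x1 \<in> S2 \<and> x2 \<in> S2 \<and> v x1 \<noteq> 0 \<and> v x2 \<noteq> 0 \<and>
     ((\<lambda>t. flow v t x1) \<longlongrightarrow> p) at_top \<and> ((\<lambda>t. flow v t x2) \<longlongrightarrow> p) at_bot \<and>
     (let g1 = (\<lambda>t. flow v t x1) ` {0..}; g2 = (\<lambda>t. flow v t x2) ` {..0} in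
      \<exists>H A. H \<subseteq> S2 \<and> H homeomorphic (cball (0::real^2) 1) \<and>
        arc A \<and> pathstart A = x1 \<and> pathfinish A = x2 \<and>
        path_image A \<inter> (g1 \<union> g2 \<union> {p}) = {x1, x2} \<and>
        H \<inter> closure (S2 - H) = g1 \<union> g2 \<union> {p} \<union> path_image A \<and>
        (\<forall>y \<in> H - (g1 \<union> g2 \<union> {p}). (\<exists>t>0. flow v t y \<notin> H) \<and> (\<exists>t<0. flow v t y \<notin> H)))"

definition Sep :: "(pt \<Rightarrow> pt) \<Rightarrow> pt set" where
  "Sep v = \<Union>{orbit v x |x. \<exists>p y. hyp_sector v p x y \<or> hyp_sector v p y x}"

text \<open>A smooth family on the ball B = ball 0 r in R^n: jointly smooth in (eps, x) on
  an open neighbourhood of B x S^2, with every member in Vect*.\<close>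
definition family_star :: "real \<Rightarrow> (real^'n \<Rightarrow> pt \<Rightarrow> pt) \<Rightarrow> bool" where
  "family_star r V \<longleftrightarrow> r > 0 \<and>
     (\<exists>U. ball 0 r \<times> S2 \<subseteq> U \<and> smooth_on U (\<lambda>(e, x). V e x)) \<and>
     (\<forall>e\<in>ball 0 r. vect_star (V e))"

definition SingF :: "real \<Rightarrow> (real^'n \<Rightarrow> pt \<Rightarrow> pt) \<Rightarrow> ((real^'n) \<times> pt) set" where
  "SingF r V = {(e, x). e \<in> ball 0 r \<and> x \<in> sing (V e)}"

definition PerF :: "real \<Rightarrow> (real^'n \<Rightarrow> pt \<Rightarrow> pt) \<Rightarrow> ((real^'n) \<times> pt) set" where
  "PerF r V = {(e, x). e \<in> ball 0 r \<and> (\<exists>C. limit_cycle (V e) C \<and> x \<in> C)}"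

definition SepF :: "real \<Rightarrow> (real^'n \<Rightarrow> pt \<Rightarrow> pt) \<Rightarrow> ((real^'n) \<times> pt) set" where
  "SepF r V = {(e, x). e \<in> ball 0 r \<and> x \<in> Sep (V e)}"

definition LBS :: "real \<Rightarrow> (real^'n \<Rightarrow> pt \<Rightarrow> pt) \<Rightarrow> pt set" where
  "LBS r V = ELBS (V 0) \<inter>
     (sing (V 0) \<union> {x. (0, x) \<in> closure (PerF r V) \<union> closure (SepF r V)})"

end

theory Submission
  imports Defs
begin

lemma S2_iff: "x \<in> S2 \<longleftrightarrow> norm x = 1" by (simp add: S2_def)
lemma compact_S2: "compact S2" by (simp add: S2_def)
lemma closed_S2: "closed S2" by (simp add: S2_def)

lemma smooth_vf_C1:
  assumes "smooth_vf v"
  obtains U f' where "open U" "S2 \<subseteq> U" "\<And>x. x \<in> U \<Longrightarrow> (v has_derivative f' x) (at x)"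
    "\<And>i. i \<in> Basis \<Longrightarrow> continuous_on U (\<lambda>x. f' x i)" "continuous_on U v"
proof -
  from assms obtain U where U: "S2 \<subseteq> U" "smooth_on U v" by (auto simp: smooth_vf_def)
  then have "open U" "Ck_on 1 U v" "Ck_on 0 U v" by (auto simp: smooth_on_def)
  then obtain f' where "\<forall>x\<in>U. (v has_derivative f' x) (at x)" "\<forall>i\<in>Basis. continuous_on U (\<lambda>x. f' x i)"
    by (auto simp: One_nat_def)
  with that U \<open>open U\<close> \<open>Ck_on 0 U v\<close> show ?thesis by (metis Ck_on.simps(1))
qed

lemma smooth_vf_cont: "smooth_vf v \<Longrightarrow> continuous_on S2 v"
  by (metis smooth_vf_C1 continuous_on_subset)

lemma smooth_vf_bound:
  assumes "smooth_vf v" obtains M where "M > 0" "\<And>x. x \<in> S2 \<Longrightarrow> norm (v x) \<le> M"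
proof -
  have "compact (v ` S2)" using compact_continuous_image[OF smooth_vf_cont[OF assms] compact_S2] .
  then obtain M where "M > 0" "\<forall>y\<in>v ` S2. norm y \<le> M" using compact_imp_bounded bounded_pos by metis
  with that show ?thesis by auto
qed

lemma smooth_vf_local_lip:
  assumes "smooth_vf v"
  shows "local_lipschitz {0::real} S2 (\<lambda>_. v)"
proof (rule local_lipschitzI)
  fix t and x :: pt assume "t \<in> {0::real}" "x \<in> S2"
  obtain U f' where U: "open U" "S2 \<subseteq> U" "\<And>x. x \<in> U \<Longrightarrow> (v has_derivative f' x) (at x)"
    "\<And>i. i \<in> Basis \<Longrightarrow> continuous_on U (\<lambda>x. f' x i)"
    using smooth_vf_C1[OF assms] by metis
  obtain u where u: "u > 0" "cball x u \<subseteq> U" using U(1,2) \<open>x \<in> S2\<close> open_contains_cball by blast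
  have "\<exists>B. \<forall>y\<in>cball x u. norm (f' y i) \<le> B" if "i \<in> Basis" for i
  proof -
    have "compact ((\<lambda>y. f' y i) ` cball x u)"
      by (rule compact_continuous_image[OF continuous_on_subset[OF U(4)[OF that] u(2)]]) simp
    then obtain B where "\<forall>z\<in>(\<lambda>y. f' y i) ` cball x u. norm z \<le> B"
      using compact_imp_bounded bounded_iff by metis
    then show ?thesis by auto
  qed
  then obtain B where B: "\<And>i y. i \<in> Basis \<Longrightarrow> y \<in> cball x u \<Longrightarrow> norm (f' y i) \<le> B i" by metis
  define C where "C = (\<Sum>i\<in>Basis. \<bar>B i\<bar>)"
  have lin: "linear (f' y)" if "y \<in> U" for y using U(3)[OF that] has_derivative_linear by blast
  have on: "onorm (f' y) \<le> C" if y: "y \<in> cball x u" for y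
  proof (rule onorm_le)
    fix h :: pt
    have yU: "y \<in> U" using y u by auto
    have "f' y h = f' y (\<Sum>i\<in>Basis. (h \<bullet> i) *\<^sub>R i)" by (simp add: euclidean_representation)
    also have "\<dots> = (\<Sum>i\<in>Basis. (h \<bullet> i) *\<^sub>R f' y i)"
      using lin[OF yU] by (simp add: linear_sum linear_scale)
    finally have eq: "f' y h = (\<Sum>i\<in>Basis. (h \<bullet> i) *\<^sub>R f' y i)" .
    have "norm (f' y h) \<le> (\<Sum>i\<in>Basis. norm ((h \<bullet> i) *\<^sub>R f' y i))"
      unfolding eq by (rule norm_sum)
    also have "\<dots> \<le> (\<Sum>i\<in>Basis. norm h * \<bar>B i\<bar>)"
    proof (rule sum_mono)
      fix i :: pt assume i: "i \<in> Basis"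
      have "norm ((h \<bullet> i) *\<^sub>R f' y i) = \<bar>h \<bullet> i\<bar> * norm (f' y i)" by simp
      also have "\<dots> \<le> norm h * \<bar>B i\<bar>"
        using B[OF i y] Basis_le_norm[OF i, of h] by (intro mult_mono) auto
      finally show "norm ((h \<bullet> i) *\<^sub>R f' y i) \<le> norm h * \<bar>B i\<bar>" .
    qed
    finally show "norm (f' y h) \<le> C * norm h" by (simp add: C_def sum_distrib_left mult.commute)
  qed
  have "norm (v a - v b) \<le> C * norm (a - b)" if "a \<in> cball x u" "b \<in> cball x u" for a b
  proof -
    have d: "\<And>z. z \<in> cball x u \<Longrightarrow> (v has_derivative f' z) (at z within cball x u)"
      using U(3) u(2) by (meson has_derivative_at_withinI subsetD)
    show ?thesis by (rule differentiable_bound[OF convex_cball d on that])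
  qed
  then have "C-lipschitz_on (cball x u \<inter> S2) v"
    by (intro lipschitz_onI) (auto simp: dist_norm C_def intro: sum_nonneg)
  then show "\<exists>u>0. \<exists>L. \<forall>t\<in>cball t u \<inter> {0}. L-lipschitz_on (cball x u \<inter> S2) v"
    using u by blast
qed

lemma smooth_vf_lip:
  assumes "smooth_vf v"
  obtains L where "L > 0" "\<And>a b. a \<in> S2 \<Longrightarrow> b \<in> S2 \<Longrightarrow> norm (v a - v b) \<le> L * norm (a - b)"
proof -
  obtain L where "L-lipschitz_on S2 v"
  proof -
    obtain L where "\<And>t. t \<in> {0::real} \<Longrightarrow> L-lipschitz_on S2 v"
      using local_lipschitz_compact_implies_lipschitz[OF smooth_vf_local_lip[OF assms] compact_S2]
      by auto
    then show ?thesis using that by blast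
  qed
  then have L0: "L \<ge> 0" by (rule lipschitz_on_nonneg)
  have "norm (v a - v b) \<le> (L+1) * norm (a - b)" if "a \<in> S2" "b \<in> S2" for a b
  proof -
    have "norm (v a - v b) \<le> L * norm (a - b)"
      using lipschitz_onD[OF \<open>L-lipschitz_on S2 v\<close> that] by (simp add: dist_norm)
    also have "\<dots> \<le> (L+1) * norm (a - b)" by (simp add: mult_right_mono)
    finally show ?thesis .
  qed
  with that[of "L+1"] L0 show ?thesis by auto
qed

lemma inner_deriv:
  fixes g :: "real \<Rightarrow> 'a::real_inner"
  assumes "(g has_vector_derivative d) (at s)"
  shows "((\<lambda>s. g s \<bullet> g s) has_real_derivative (2 * (g s \<bullet> d))) (at s)"
proof -
  have "((\<lambda>s. g s \<bullet> g s) has_derivative (\<lambda>h. g s \<bullet> (h *\<^sub>R d) + (h *\<^sub>R d) \<bullet> g s)) (at s)"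
    using assms unfolding has_vector_derivative_def by (intro has_derivative_inner) auto
  moreover have "(\<lambda>h. g s \<bullet> (h *\<^sub>R d) + (h *\<^sub>R d) \<bullet> g s) = (*) (2 * (g s \<bullet> d))"
    by (auto simp: inner_commute algebra_simps)
  ultimately show ?thesis by (simp add: has_field_derivative_def)
qed

lemma exp_shift_le:
  fixes X Y c :: real
  assumes "exp (-c) * X \<le> Y" shows "X \<le> exp c * Y"
proof -
  have "X = exp c * (exp (-c) * X)" by (simp add: mult.assoc[symmetric] exp_add[symmetric])
  also have "\<dots> \<le> exp c * Y" using assms by (intro mult_left_mono) auto
  finally show ?thesis .
qed

lemma gronwall:
  fixes g1 g2 :: "real \<Rightarrow> 'a::real_inner"
  assumes d1: "\<And>s. s \<in> {a<..<b} \<Longrightarrow> (g1 has_vector_derivative d1 s) (at s)"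
    and d2: "\<And>s. s \<in> {a<..<b} \<Longrightarrow> (g2 has_vector_derivative d2 s) (at s)"
    and bnd: "\<And>s. s \<in> {a<..<b} \<Longrightarrow> norm (d1 s - d2 s) \<le> L * norm (g1 s - g2 s) + \<delta>"
    and L: "L \<ge> 0" and dl: "\<delta> \<ge> 0" and t0: "t0 \<in> {a<..<b}" and t: "t \<in> {a<..<b}"
  shows "norm (g1 t - g2 t)^2 \<le> exp ((2*L+1) * \<bar>t - t0\<bar>) * (norm (g1 t0 - g2 t0)^2 + \<delta>^2)"
proof -
  define K where "K = 2*L+1"
  define e where "e s = g1 s - g2 s" for s
  define u where "u s = e s \<bullet> e s" for s
  define u' where "u' s = 2 * (e s \<bullet> (d1 s - d2 s))" for s
  have K1: "K \<ge> 1" using L by (simp add: K_def)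
  have ue: "u s = norm (e s)^2" for s by (simp add: u_def power2_norm_eq_inner)
  have du: "(u has_real_derivative u' s) (at s)" if "s \<in> {a<..<b}" for s
    unfolding u_def u'_def e_def
    by (rule inner_deriv, rule has_vector_derivative_diff[OF d1[OF that] d2[OF that]])
  have ub: "\<bar>u' s\<bar> \<le> K * u s + \<delta>^2" if "s \<in> {a<..<b}" for s
  proof -
    have "\<bar>u' s\<bar> \<le> 2 * (norm (e s) * norm (d1 s - d2 s))"
      unfolding u'_def using Cauchy_Schwarz_ineq2[of "e s" "d1 s - d2 s"] by simp
    also have "\<dots> \<le> 2 * (norm (e s) * (L * norm (e s) + \<delta>))"
      using bnd[OF that] by (intro mult_left_mono) (auto simp: e_def)
    also have "\<dots> = 2 * L * norm (e s)^2 + 2 * norm (e s) * \<delta>" by (simp add: algebra_simps power2_eq_square)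
    also have "\<dots> \<le> 2 * L * norm (e s)^2 + (norm (e s)^2 + \<delta>^2)"
      using sum_squares_bound[of "norm (e s)" \<delta>] by (simp add: algebra_simps)
    also have "\<dots> = K * u s + \<delta>^2" by (simp add: K_def ue algebra_simps)
    finally show ?thesis .
  qed
  have u0: "u s \<ge> 0" for s by (simp add: u_def)
  show ?thesis
  proof (cases "t0 \<le> t")
    case True
    define \<psi> where "\<psi> s = exp (- K * (s - t0)) * (u s + \<delta>^2)" for s
    have "\<psi> t \<le> \<psi> t0"
    proof (rule DERIV_nonpos_imp_nonincreasing[OF True])
      fix x assume x: "t0 \<le> x" "x \<le> t"
      then have xi: "x \<in> {a<..<b}" using t0 t by auto
      have "(\<psi> has_real_derivative
          (exp (- K * (x - t0)) * (- K)) * (u x + \<delta>^2) + exp (- K * (x - t0)) * u' x) (at x)"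
        unfolding \<psi>_def
        by (auto intro!: derivative_eq_intros du[OF xi])
      moreover have "(exp (- K * (x - t0)) * (- K)) * (u x + \<delta>^2) + exp (- K * (x - t0)) * u' x
          = exp (- K * (x - t0)) * (u' x - K * (u x + \<delta>^2))" by (simp add: algebra_simps)
      moreover have "u' x - K * (u x + \<delta>^2) \<le> 0"
      proof -
        have "\<delta>^2 \<le> K * \<delta>^2" using K1 mult_right_mono[OF K1, of "\<delta>^2"] by simp
        then show ?thesis using ub[OF xi] abs_ge_self[of "u' x"] by (simp add: algebra_simps)
      qed
      ultimately show "\<exists>y. (\<psi> has_real_derivative y) (at x) \<and> y \<le> 0"
        by (metis exp_gt_zero less_eq_real_def mult_le_0_iff)
    qed
    then have "exp (- K * (t - t0)) * (u t + \<delta>^2) \<le> u t0 + \<delta>^2" by (simp add: \<psi>_def)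
    then have "u t + \<delta>^2 \<le> exp (K * (t - t0)) * (u t0 + \<delta>^2)"
      by (intro exp_shift_le) simp
    then have "u t \<le> exp (K * (t - t0)) * (u t0 + \<delta>^2)" using zero_le_power2[of \<delta>] by linarith
    then show ?thesis using True by (simp add: ue e_def K_def)
  next
    case False
    then have tt: "t \<le> t0" by simp
    define \<psi> where "\<psi> s = exp (K * (s - t0)) * (u s + \<delta>^2)" for s
    have "\<psi> t \<le> \<psi> t0"
    proof (rule DERIV_nonneg_imp_nondecreasing[OF tt])
      fix x assume x: "t \<le> x" "x \<le> t0"
      then have xi: "x \<in> {a<..<b}" using t0 t by auto
      have "(\<psi> has_real_derivative
          (exp (K * (x - t0)) * K) * (u x + \<delta>^2) + exp (K * (x - t0)) * u' x) (at x)"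
        unfolding \<psi>_def
        by (auto intro!: derivative_eq_intros du[OF xi])
      moreover have "(exp (K * (x - t0)) * K) * (u x + \<delta>^2) + exp (K * (x - t0)) * u' x
          = exp (K * (x - t0)) * (u' x + K * (u x + \<delta>^2))" by (simp add: algebra_simps)
      moreover have "u' x + K * (u x + \<delta>^2) \<ge> 0"
      proof -
        have "\<delta>^2 \<le> K * \<delta>^2" using K1 mult_right_mono[OF K1, of "\<delta>^2"] by simp
        then show ?thesis using ub[OF xi] abs_ge_minus_self[of "u' x"] by (simp add: algebra_simps)
      qed
      ultimately show "\<exists>y. (\<psi> has_real_derivative y) (at x) \<and> y \<ge> 0"
        by (metis exp_gt_zero less_eq_real_def zero_le_mult_iff)
    qed
    then have "exp (K * (t - t0)) * (u t + \<delta>^2) \<le> u t0 + \<delta>^2" by (simp add: \<psi>_def)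
    then have "u t + \<delta>^2 \<le> exp (K * (t0 - t)) * (u t0 + \<delta>^2)"
      by (intro exp_shift_le) (simp add: algebra_simps)
    then have "u t \<le> exp (K * (t0 - t)) * (u t0 + \<delta>^2)" using zero_le_power2[of \<delta>] by linarith
    then show ?thesis using tt by (simp add: ue e_def K_def)
  qed
qed

definition J :: "(real \<Rightarrow> 'a::banach) \<Rightarrow> real \<Rightarrow> 'a" where
  "J h t = integral {0..t} h - integral {t..0} h"

lemma J0[simp]: "J h 0 = 0" by (simp add: J_def)

lemma int_cont: "continuous_on UNIV (h :: real \<Rightarrow> 'a::banach) \<Longrightarrow> h integrable_on {a..b::real}"
  by (rule integrable_continuous_interval) (rule continuous_on_subset, auto)

lemma J_base:
  fixes h :: "real \<Rightarrow> 'a::banach"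
  assumes h: "continuous_on UNIV h" and a: "a \<le> 0" "a \<le> t"
  shows "J h t = integral {a..t} h - integral {a..0} h"
proof (cases "0 \<le> t")
  case True
  have "integral {t..0} h = 0"
  proof (cases "t = 0")
    case False then have "{t..0} = {}" using True by auto
    then show ?thesis by simp
  qed simp
  moreover have "integral {a..0} h + integral {0..t} h = integral {a..t} h"
    by (rule Henstock_Kurzweil_Integration.integral_combine) (use a True int_cont[OF h] in auto)
  ultimately show ?thesis by (simp add: J_def algebra_simps)
next
  case False
  then have "{0..t} = {}" by auto
  moreover have "integral {a..t} h + integral {t..0} h = integral {a..0} h"
    by (rule Henstock_Kurzweil_Integration.integral_combine) (use a False int_cont[OF h] in auto)
  ultimately show ?thesis by (simp add: J_def algebra_simps)
qed

lemma J_deriv: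
  fixes h :: "real \<Rightarrow> 'a::banach"
  assumes h: "continuous_on UNIV h"
  shows "(J h has_vector_derivative h t) (at t)"
proof -
  define a where "a = - \<bar>t\<bar> - 2"
  define b where "b = \<bar>t\<bar> + 2"
  have tin: "t \<in> {a<..<b}" by (auto simp: a_def b_def)
  have "((\<lambda>u. integral {a..u} h) has_vector_derivative h t) (at t within {a..b})"
    by (rule integral_has_vector_derivative) (use continuous_on_subset[OF h] tin in auto)
  then have "((\<lambda>u. integral {a..u} h) has_vector_derivative h t) (at t)"
    using at_within_interior[of t "{a..b}"] tin by simp
  then have "((\<lambda>u. integral {a..u} h - integral {a..0} h) has_vector_derivative h t) (at t)"
    by (rule has_vector_derivative_diff[where g'=0, simplified]) (rule has_vector_derivative_const)
  then show ?thesis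
    by (rule has_vector_derivative_transform_within_open[where S="{a<..<b}"])
       (use tin in \<open>auto simp: a_def b_def intro!: J_base[OF h, symmetric]\<close>)
qed

lemma J_cont: "continuous_on UNIV h \<Longrightarrow> continuous_on UNIV (J h)"
  by (meson J_deriv continuous_at_imp_continuous_on has_vector_derivative_continuous)

lemma J_diff:
  fixes h1 h2 :: "real \<Rightarrow> 'a::banach"
  assumes "continuous_on UNIV h1" "continuous_on UNIV h2"
  shows "J (\<lambda>s. h1 s - h2 s) t = J h1 t - J h2 t"
  using int_cont[OF assms(1)] int_cont[OF assms(2)]
  by (simp add: J_def integral_diff algebra_simps)

lemma J_bound:
  fixes h :: "real \<Rightarrow> 'a::banach" and g :: "real \<Rightarrow> real"
  assumes h: "continuous_on UNIV h" and g: "continuous_on UNIV g" and le: "\<And>s. norm (h s) \<le> g s"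
  shows "norm (J h t) \<le> \<bar>J g t\<bar>"
proof (cases "0 \<le> t")
  case True
  have e: "integral {t..0} f = 0" for f :: "real \<Rightarrow> 'b::banach"
  proof (cases "t = 0")
    case False then have "{t..0} = {}" using True by auto
    then show ?thesis by simp
  qed simp
  have "norm (integral {0..t} h) \<le> integral {0..t} g"
    by (rule integral_norm_bound_integral[OF int_cont[OF h] int_cont[OF g] le])
  then show ?thesis by (simp add: J_def e[of h] e[of g])
next
  case False
  then have e: "{0..t} = {}" by auto
  have "norm (integral {t..0} h) \<le> integral {t..0} g"
    by (rule integral_norm_bound_integral[OF int_cont[OF h] int_cont[OF g] le])
  then show ?thesis by (simp add: J_def e)
qed

lemma J_exp:
  fixes K C :: real
  assumes K: "K > 0" and C: "C \<ge> 0"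
  shows "\<bar>J (\<lambda>s. C * exp (K * \<bar>s\<bar>)) t\<bar> \<le> C / K * exp (K * \<bar>t\<bar>)"
proof (cases "0 \<le> t")
  case True
  have e: "integral {t..0} f = 0" for f :: "real \<Rightarrow> real"
  proof (cases "t = 0")
    case False then have "{t..0} = {}" using True by auto
    then show ?thesis by simp
  qed simp
  have HI: "((\<lambda>s. C * exp (K * \<bar>s\<bar>)) has_integral (C / K * exp (K * t) - C / K * exp (K * 0))) {0..t}"
  proof (rule fundamental_theorem_of_calculus[OF True])
    fix x assume x: "x \<in> {0..t}"
    have "((\<lambda>s. C / K * exp (K * s)) has_real_derivative C / K * (exp (K * x) * K)) (at x)"
      by (auto intro!: derivative_eq_intros)
    moreover have "C / K * (exp (K * x) * K) = C * exp (K * \<bar>x\<bar>)" using K x by auto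
    ultimately show "((\<lambda>s. C / K * exp (K * s)) has_vector_derivative C * exp (K * \<bar>x\<bar>)) (at x within {0..t})"
      by (simp add: has_real_derivative_iff_has_vector_derivative[symmetric] has_field_derivative_at_within)
  qed
  have I: "integral {0..t} (\<lambda>s. C * exp (K * \<bar>s\<bar>)) = C / K * exp (K * t) - C / K"
    by (rule trans[OF integral_unique[OF HI]]) simp
  have "J (\<lambda>s. C * exp (K * \<bar>s\<bar>)) t = C / K * exp (K * t) - C / K"
    unfolding J_def e I by simp
  moreover have "C / K \<ge> 0" using K C by simp
  moreover have "C / K * exp (K * t) \<ge> C / K"
  proof -
    have "1 \<le> exp (K * t)" using K True by simp
    then have "C / K * 1 \<le> C / K * exp (K * t)" by (rule mult_left_mono) (use K C in simp)
    then show ?thesis by simp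
  qed
  ultimately show ?thesis using True by simp
next
  case False
  then have e: "{0..t} = {}" by auto
  have HI: "((\<lambda>s. C * exp (K * \<bar>s\<bar>)) has_integral (- C / K * exp (- K * 0) - (- C / K * exp (- K * t)))) {t..0}"
  proof (rule fundamental_theorem_of_calculus)
    show "t \<le> 0" using False by simp
    fix x assume x: "x \<in> {t..0}"
    have "((\<lambda>s. - C / K * exp (- K * s)) has_real_derivative - C / K * (exp (- K * x) * - K)) (at x)"
      by (auto intro!: derivative_eq_intros)
    moreover have "- C / K * (exp (- K * x) * - K) = C * exp (K * \<bar>x\<bar>)" using K x by auto
    ultimately show "((\<lambda>s. - C / K * exp (- K * s)) has_vector_derivative C * exp (K * \<bar>x\<bar>)) (at x within {t..0})"
      by (simp add: has_real_derivative_iff_has_vector_derivative[symmetric] has_field_derivative_at_within)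
  qed
  have I: "integral {t..0} (\<lambda>s. C * exp (K * \<bar>s\<bar>)) = C / K * exp (- K * t) - C / K"
    by (rule trans[OF integral_unique[OF HI]]) simp
  have "J (\<lambda>s. C * exp (K * \<bar>s\<bar>)) t = - (C / K * exp (- K * t) - C / K)"
    unfolding J_def e I by simp
  moreover have "C / K \<ge> 0" using K C by simp
  moreover have "C / K * exp (- K * t) \<ge> C / K"
  proof -
    have "1 \<le> exp (- K * t)" using K False by (simp add: mult_nonneg_nonpos)
    then have "C / K * 1 \<le> C / K * exp (- K * t)" by (rule mult_left_mono) (use K C in simp)
    then show ?thesis by simp
  qed
  ultimately show ?thesis using False by simp
qed

lemma lip_exists:
  fixes w :: "pt \<Rightarrow> pt" and x :: pt
  assumes L: "L > 0" and lip: "\<And>a b. norm (w a - w b) \<le> L * norm (a - b)"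
  shows "\<exists>f. f 0 = x \<and> (\<forall>t. (f has_vector_derivative w (f t)) (at t))"
proof -
  define K where "K = 2 * L"
  have K: "K > 0" using L by (simp add: K_def)
  have wc: "continuous_on UNIV w"
    by (rule lipschitz_on_continuous_on[of L]) (use lip L in \<open>auto intro!: lipschitz_onI simp: dist_norm\<close>)
  define wt where "wt g s = exp (K * \<bar>s\<bar>) *\<^sub>R apply_bcontfun g s" for g :: "real \<Rightarrow>\<^sub>C pt" and s
  have wtc: "continuous_on UNIV (wt g)" for g
    unfolding wt_def by (intro continuous_intros) auto
  define hh where "hh g s = w (wt g s)" for g s
  have hhc: "continuous_on UNIV (hh g)" for g
    unfolding hh_def by (rule continuous_on_compose2[OF wc wtc]) auto
  define Q0 where "Q0 g t = exp (- K * \<bar>t\<bar>) *\<^sub>R (x + J (hh g) t)" for g t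
  have Q0b: "Q0 g \<in> bcontfun" for g
  proof -
    have c: "continuous_on UNIV (Q0 g)"
      unfolding Q0_def by (intro continuous_intros J_cont hhc)
    obtain B where B: "\<And>s. norm (apply_bcontfun g s) \<le> B"
      using bounded_apply_bcontfun[of g] by (auto simp: bounded_iff)
    have B0: "B \<ge> 0" using B[of 0] norm_ge_zero order_trans by blast
    define C where "C = norm (w 0) + L * B"
    have C0: "C \<ge> 0" using B0 L by (simp add: C_def)
    have hb: "norm (hh g s) \<le> C * exp (K * \<bar>s\<bar>)" for s
    proof -
      have "norm (hh g s) \<le> norm (w 0) + norm (hh g s - w 0)" by (simp add: norm_triangle_sub)
      also have "\<dots> \<le> norm (w 0) + L * norm (wt g s)"
        using lip[of "wt g s" 0] by (simp add: hh_def)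
      also have "norm (wt g s) = exp (K * \<bar>s\<bar>) * norm (apply_bcontfun g s)" by (simp add: wt_def)
      also have "\<dots> \<le> exp (K * \<bar>s\<bar>) * B" using B[of s] by (simp add: mult_left_mono)
      finally have "norm (hh g s) \<le> norm (w 0) + L * (exp (K * \<bar>s\<bar>) * B)" using L by (simp add: mult_left_mono)
      also have "\<dots> \<le> norm (w 0) * exp (K * \<bar>s\<bar>) + L * (exp (K * \<bar>s\<bar>) * B)"
        using K by (simp add: mult_left_mono[of 1 "exp (K * \<bar>s\<bar>)" "norm (w 0)", simplified])
      finally show ?thesis by (simp add: C_def algebra_simps)
    qed
    have "norm (Q0 g t) \<le> norm x + C / K" for t
    proof -
      have cc: "continuous_on UNIV (\<lambda>s. C * exp (K * \<bar>s\<bar>))" by (intro continuous_intros)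
      have Jb: "norm (J (hh g) t) \<le> C / K * exp (K * \<bar>t\<bar>)"
        using J_bound[OF hhc cc hb, of t] J_exp[OF K C0, of t] by linarith
      have e1: "exp (- K * \<bar>t\<bar>) \<le> 1" using K by simp
      have "norm (Q0 g t) = exp (- K * \<bar>t\<bar>) * norm (x + J (hh g) t)" by (simp add: Q0_def)
      also have "\<dots> \<le> exp (- K * \<bar>t\<bar>) * (norm x + C / K * exp (K * \<bar>t\<bar>))"
        using Jb norm_triangle_ineq[of x "J (hh g) t"] by (intro mult_left_mono) auto
      also have "\<dots> = exp (- K * \<bar>t\<bar>) * norm x + C / K"
        by (simp add: algebra_simps mult_exp_exp)
      also have "\<dots> \<le> norm x + C / K" using e1 mult_right_mono[OF e1 norm_ge_zero[of x]] by simp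
      finally show ?thesis .
    qed
    then have "bounded (range (Q0 g))" by (auto simp: bounded_iff)
    with c show ?thesis by (simp add: bcontfun_def)
  qed
  define Q where "Q g = Bcontfun (Q0 g)" for g
  have Qa: "apply_bcontfun (Q g) = Q0 g" for g by (simp add: Q_def Bcontfun_inverse[OF Q0b])
  have contr: "dist (Q g1) (Q g2) \<le> 1/2 * dist g1 g2" for g1 g2
  proof (rule dist_bound)
    fix t
    define D where "D = dist g1 g2"
    have D0: "D \<ge> 0" by (simp add: D_def)
    have hb: "norm (hh g1 s - hh g2 s) \<le> (L * D) * exp (K * \<bar>s\<bar>)" for s
    proof -
      have "norm (hh g1 s - hh g2 s) \<le> L * norm (wt g1 s - wt g2 s)" using lip by (simp add: hh_def)
      also have "norm (wt g1 s - wt g2 s) = exp (K * \<bar>s\<bar>) * dist (apply_bcontfun g1 s) (apply_bcontfun g2 s)"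
        by (simp add: wt_def dist_norm scaleR_diff_right[symmetric])
      also have "\<dots> \<le> exp (K * \<bar>s\<bar>) * D" unfolding D_def by (intro mult_left_mono dist_bounded) auto
      finally show ?thesis using L by (simp add: mult_left_mono algebra_simps)
    qed
    have LD: "L * D \<ge> 0" using L D0 by simp
    have cc: "continuous_on UNIV (\<lambda>s. (L * D) * exp (K * \<bar>s\<bar>))" by (intro continuous_intros)
    have cd: "continuous_on UNIV (\<lambda>s. hh g1 s - hh g2 s)" by (intro continuous_intros hhc)
    have "norm (J (\<lambda>s. hh g1 s - hh g2 s) t) \<le> (L * D) / K * exp (K * \<bar>t\<bar>)"
      using J_bound[OF cd cc hb, of t] J_exp[OF K LD, of t] by linarith
    then have Jb: "norm (J (hh g1) t - J (hh g2) t) \<le> D / 2 * exp (K * \<bar>t\<bar>)"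
      using L by (simp add: J_diff[OF hhc hhc] K_def)
    have "dist (Q g1 t) (Q g2 t) = exp (- K * \<bar>t\<bar>) * norm (J (hh g1) t - J (hh g2) t)"
      by (simp add: Qa Q0_def dist_norm scaleR_diff_right[symmetric])
    also have "\<dots> \<le> exp (- K * \<bar>t\<bar>) * (D / 2 * exp (K * \<bar>t\<bar>))"
      using Jb by (intro mult_left_mono) auto
    also have "\<dots> = D / 2" by (simp add: algebra_simps mult_exp_exp)
    finally show "dist (Q g1 t) (Q g2 t) \<le> 1/2 * dist g1 g2" by (simp add: D_def)
  qed
  obtain g where g: "Q g = g"
    using banach_fix_type[of "1/2" Q] contr by auto
  define f where "f = wt g"
  have feq: "f t = x + J (\<lambda>s. w (f s)) t" for t
  proof -
    have "f t = exp (K * \<bar>t\<bar>) *\<^sub>R Q0 g t" using g by (metis Qa f_def wt_def)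
    also have "\<dots> = x + J (hh g) t" by (simp add: Q0_def mult_exp_exp)
    also have "hh g = (\<lambda>s. w (f s))" by (simp add: hh_def f_def fun_eq_iff)
    finally show ?thesis .
  qed
  have "(\<lambda>s. w (f s)) = hh g" by (simp add: hh_def f_def fun_eq_iff)
  then have fc: "continuous_on UNIV (\<lambda>s. w (f s))" using hhc[of g] by metis
  have eqf: "f = (\<lambda>t. x + J (\<lambda>s. w (f s)) t)" by (intro ext feq)
  have "((\<lambda>t. x + J (\<lambda>s. w (f s)) t) has_vector_derivative w (f t)) (at t)" for t
    using has_vector_derivative_add[OF has_vector_derivative_const J_deriv[OF fc]] by simp
  then have "(f has_vector_derivative w (f t)) (at t)" for t
    unfolding eqf[symmetric] .
  moreover have "f 0 = x + J (\<lambda>s. w (f s)) 0" by (rule feq)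
  then have "f 0 = x" by (simp only: J0 add_0_right)
  ultimately show ?thesis by blast
qed

definition wmod :: "(pt \<Rightarrow> pt) \<Rightarrow> pt \<Rightarrow> pt" where
  "wmod v y = norm y *\<^sub>R v (y /\<^sub>R norm y)"

lemma unit_S2: "y \<noteq> 0 \<Longrightarrow> y /\<^sub>R norm y \<in> S2"
  by (simp add: S2_iff)

lemma norm_rescale: "(b::pt) \<noteq> 0 \<Longrightarrow> norm b *\<^sub>R (a /\<^sub>R norm a) - b = (norm b - norm a) *\<^sub>R (a /\<^sub>R norm a) + (a - b)" if "a \<noteq> 0"
  using that by (simp add: algebra_simps)

lemma wmod_lip:
  assumes "smooth_vf v"
  obtains L where "L > 0" "\<And>a b. norm (wmod v a - wmod v b) \<le> L * norm (a - b)"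
proof -
  obtain M where M: "M > 0" "\<And>x. x \<in> S2 \<Longrightarrow> norm (v x) \<le> M" using smooth_vf_bound[OF assms] by blast
  obtain L where L: "L > 0" "\<And>a b. a \<in> S2 \<Longrightarrow> b \<in> S2 \<Longrightarrow> norm (v a - v b) \<le> L * norm (a - b)"
    using smooth_vf_lip[OF assms] by blast
  have wb: "norm (wmod v y) \<le> M * norm y" for y
  proof (cases "y = 0")
    case False
    then show ?thesis using M(2)[OF unit_S2[OF False]] by (simp add: wmod_def mult.commute mult_left_mono)
  qed (simp add: wmod_def)
  have "norm (wmod v a - wmod v b) \<le> (M + 2 * L) * norm (a - b)" for a b
  proof (cases "a = 0 \<or> b = 0")
    case True
    then show ?thesis
    proof
      assume a: "a = 0"
      then have "norm (wmod v a - wmod v b) = norm (wmod v b)" by (simp add: wmod_def)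
      also have "\<dots> \<le> M * norm b" by (rule wb)
      also have "\<dots> \<le> (M + 2 * L) * norm b" using L by (simp add: mult_right_mono)
      finally show ?thesis using a by simp
    next
      assume b: "b = 0"
      then have "norm (wmod v a - wmod v b) = norm (wmod v a)" by (simp add: wmod_def)
      also have "\<dots> \<le> M * norm a" by (rule wb)
      also have "\<dots> \<le> (M + 2 * L) * norm a" using L by (simp add: mult_right_mono)
      finally show ?thesis using b by simp
    qed
  next
    case False
    then have a: "a \<noteq> 0" and b: "b \<noteq> 0" by auto
    define ah where "ah = a /\<^sub>R norm a"
    define bh where "bh = b /\<^sub>R norm b"
    have ahS: "ah \<in> S2" and bhS: "bh \<in> S2" using unit_S2 a b by (auto simp: ah_def bh_def)
    have bb: "norm b *\<^sub>R bh = b" using b by (simp add: bh_def)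
    have "wmod v a - wmod v b = (norm a - norm b) *\<^sub>R v ah + norm b *\<^sub>R (v ah - v bh)"
      by (simp add: wmod_def ah_def bh_def algebra_simps)
    then have "norm (wmod v a - wmod v b) \<le> \<bar>norm a - norm b\<bar> * norm (v ah) + norm b * norm (v ah - v bh)"
      by (metis norm_scaleR norm_triangle_ineq abs_norm_cancel)
    also have "\<dots> \<le> norm (a - b) * M + norm b * (L * norm (ah - bh))"
      using M(2)[OF ahS] L(2)[OF ahS bhS] norm_triangle_ineq3[of a b]
      by (intro add_mono mult_mono) auto
    finally have 1: "norm (wmod v a - wmod v b) \<le> norm (a - b) * M + norm b * (L * norm (ah - bh))" .
    have "norm b * norm (ah - bh) = norm (norm b *\<^sub>R ah - b)"
      by (metis bb norm_scaleR abs_norm_cancel scaleR_diff_right)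
    also have "norm b *\<^sub>R ah - b = (norm b - norm a) *\<^sub>R ah + (a - b)"
      using a by (simp add: ah_def algebra_simps)
    also have "norm ((norm b - norm a) *\<^sub>R ah + (a - b)) \<le> \<bar>norm b - norm a\<bar> * norm ah + norm (a - b)"
      by (metis norm_scaleR norm_triangle_ineq)
    also have "norm ah = 1" using ahS by (simp add: S2_iff)
    also have "\<bar>norm b - norm a\<bar> \<le> norm (a - b)" by (metis norm_triangle_ineq3 norm_minus_commute)
    finally have 2: "norm b * norm (ah - bh) \<le> 2 * norm (a - b)" by simp
    have "norm b * (L * norm (ah - bh)) = L * (norm b * norm (ah - bh))" by simp
    also have "\<dots> \<le> L * (2 * norm (a - b))" using 2 L(1) by (intro mult_left_mono) auto
    finally have 3: "norm b * (L * norm (ah - bh)) \<le> L * (2 * norm (a - b))" .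
    show ?thesis using 1 3 by (simp add: algebra_simps)
  qed
  then show ?thesis using that[of "M + 2 * L"] M L by auto
qed

lemma wmod_S2: "y \<in> S2 \<Longrightarrow> wmod v y = v y"
  by (simp add: wmod_def S2_iff)

lemma wmod_tangent:
  assumes "smooth_vf v" shows "y \<bullet> wmod v y = 0"
proof (cases "y = 0")
  case False
  have "v (y /\<^sub>R norm y) \<bullet> (y /\<^sub>R norm y) = 0" using assms unit_S2[OF False] unfolding smooth_vf_def by blast
  then have "v (y /\<^sub>R norm y) \<bullet> y = 0" using False by (simp add: inner_scaleR_right)
  then show ?thesis by (simp add: wmod_def inner_commute)
qed (simp add: wmod_def)

lemma solution_exists:
  assumes v: "smooth_vf v" and x: "x \<in> S2"
  shows "\<exists>g. is_solution v g \<and> g 0 = x"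
proof -
  obtain L where L: "L > 0" "\<And>a b. norm (wmod v a - wmod v b) \<le> L * norm (a - b)"
    using wmod_lip[OF v] by blast
  obtain f where f0: "f 0 = x" and fd: "\<And>t. (f has_vector_derivative wmod v (f t)) (at t)"
    using lip_exists[OF L] by blast
  have "((\<lambda>s. f s \<bullet> f s) has_real_derivative 0) (at t within UNIV)" for t
    using inner_deriv[OF fd[of t]] wmod_tangent[OF v, of "f t"] by simp
  then obtain c where c: "\<And>t. f t \<bullet> f t = c"
    using has_field_derivative_zero_constant[of UNIV "\<lambda>s. f s \<bullet> f s"] by auto
  have "c = 1" using c[of 0] f0 x by (simp add: S2_iff power2_norm_eq_inner[symmetric])
  have fS: "f t \<in> S2" for t
  proof -
    have "norm (f t)^2 = 1" using c[of t] \<open>c = 1\<close> by (simp add: power2_norm_eq_inner)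
    then have "norm (f t) = 1 \<or> norm (f t) = -1" using power2_eq_1_iff by blast
    then show ?thesis using norm_ge_zero[of "f t"] by (auto simp: S2_iff)
  qed
  have "is_solution v f" unfolding is_solution_def using fS fd wmod_S2[OF fS] by metis
  with f0 show ?thesis by blast
qed

lemma flow_sol:
  assumes v: "smooth_vf v" and x: "x \<in> S2"
  shows "is_solution v (\<lambda>t. flow v t x)" "flow v 0 x = x"
proof -
  have "is_solution v (SOME g. is_solution v g \<and> g 0 = x) \<and> (SOME g. is_solution v g \<and> g 0 = x) 0 = x"
    using someI_ex[OF solution_exists[OF v x]] .
  moreover have "(\<lambda>t. flow v t x) = (SOME g. is_solution v g \<and> g 0 = x)" by (simp add: flow_def fun_eq_iff)
  ultimately show "is_solution v (\<lambda>t. flow v t x)" "flow v 0 x = x" by (auto simp: flow_def)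
qed

lemma flow_S2: "smooth_vf v \<Longrightarrow> x \<in> S2 \<Longrightarrow> flow v t x \<in> S2"
  using flow_sol(1) by (auto simp: is_solution_def)

lemma flow_deriv: "smooth_vf v \<Longrightarrow> x \<in> S2 \<Longrightarrow> ((\<lambda>t. flow v t x) has_vector_derivative v (flow v t x)) (at t)"
  using flow_sol(1) by (auto simp: is_solution_def)

lemma flow_cont_t:
  assumes "smooth_vf v" "x \<in> S2" shows "continuous_on UNIV (\<lambda>t. flow v t x)"
proof -
  have "isCont (\<lambda>t. flow v t x) t" for t using has_vector_derivative_continuous[OF flow_deriv[OF assms]] .
  then show ?thesis by (simp add: continuous_at_imp_continuous_on)
qed

lemma sol_gronwall:
  assumes v1: "smooth_vf v1" and g1: "is_solution v1 g1" and g2: "is_solution v2 g2"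
    and L: "L \<ge> 0" and d: "\<delta> \<ge> 0"
    and bnd: "\<And>a b. a \<in> S2 \<Longrightarrow> b \<in> S2 \<Longrightarrow> norm (v1 a - v2 b) \<le> L * norm (a - b) + \<delta>"
  shows "norm (g1 t - g2 t)^2 \<le> exp ((2*L+1) * \<bar>t - t0\<bar>) * (norm (g1 t0 - g2 t0)^2 + \<delta>^2)"
proof -
  define a where "a = - \<bar>t\<bar> - \<bar>t0\<bar> - 1"
  define b where "b = \<bar>t\<bar> + \<bar>t0\<bar> + 1"
  have D1: "\<And>s. s \<in> {a<..<b} \<Longrightarrow> (g1 has_vector_derivative v1 (g1 s)) (at s)" using g1 by (simp add: is_solution_def)
  have D2: "\<And>s. s \<in> {a<..<b} \<Longrightarrow> (g2 has_vector_derivative v2 (g2 s)) (at s)" using g2 by (simp add: is_solution_def)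
  have B: "\<And>s. s \<in> {a<..<b} \<Longrightarrow> norm (v1 (g1 s) - v2 (g2 s)) \<le> L * norm (g1 s - g2 s) + \<delta>"
    using bnd g1 g2 by (simp add: is_solution_def)
  show ?thesis by (rule gronwall[OF D1 D2 B L d]) (auto simp: a_def b_def)
qed

lemma sol_unique:
  assumes v: "smooth_vf v" and g1: "is_solution v g1" and g2: "is_solution v g2" and eq: "g1 t0 = g2 t0"
  shows "g1 t = g2 t"
proof -
  obtain L where L: "L > 0" "\<And>a b. a \<in> S2 \<Longrightarrow> b \<in> S2 \<Longrightarrow> norm (v a - v b) \<le> L * norm (a - b)"
    using smooth_vf_lip[OF v] by blast
  have "norm (g1 t - g2 t)^2 \<le> exp ((2*L+1) * \<bar>t - t0\<bar>) * (norm (g1 t0 - g2 t0)^2 + 0^2)"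
    by (rule sol_gronwall[OF v g1 g2]) (use L in auto)
  then show ?thesis using eq by simp
qed

lemma flow_unique:
  assumes v: "smooth_vf v" and g: "is_solution v g"
  shows "flow v t (g 0) = g t"
proof -
  have g0: "g 0 \<in> S2" using g by (simp add: is_solution_def)
  show ?thesis by (rule sol_unique[OF v flow_sol(1)[OF v g0] g, of 0]) (simp add: flow_sol(2)[OF v g0])
qed

lemma shift_sol:
  assumes g: "is_solution v g" shows "is_solution v (\<lambda>s. g (s + c))"
  unfolding is_solution_def
proof (intro allI conjI)
  fix s
  show "g (s + c) \<in> S2" using g by (simp add: is_solution_def)
  have "((\<lambda>s. s + c) has_vector_derivative 1) (at s)" by (auto intro!: derivative_eq_intros)
  moreover have "(g has_vector_derivative v (g (s + c))) (at (s + c))" using g by (simp add: is_solution_def)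
  ultimately have "((g \<circ> (\<lambda>s. s + c)) has_vector_derivative (1 *\<^sub>R v (g (s + c)))) (at s)"
    by (rule vector_diff_chain_at)
  then show "((\<lambda>s. g (s + c)) has_vector_derivative v (g (s + c))) (at s)" by (simp add: o_def)
qed

lemma flow_add:
  assumes v: "smooth_vf v" and x: "x \<in> S2"
  shows "flow v (s + t) x = flow v s (flow v t x)"
  using flow_unique[OF v shift_sol[OF flow_sol(1)[OF v x], of t], of s] by simp

lemma flow_sing:
  assumes v: "smooth_vf v" and p: "p \<in> S2" "v p = 0"
  shows "flow v t p = p"
proof -
  have "is_solution v (\<lambda>_. p)" using p by (simp add: is_solution_def)
  from flow_unique[OF v this] show ?thesis by simp
qed

lemma flow_nonsing:
  assumes v: "smooth_vf v" and x: "x \<in> S2" "v x \<noteq> 0"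
  shows "v (flow v t x) \<noteq> 0"
proof
  assume h: "v (flow v t x) = 0"
  have "x = flow v 0 x" using flow_sol(2)[OF v x(1)] by simp
  also have "\<dots> = flow v (-t + t) x" by simp
  also have "\<dots> = flow v (-t) (flow v t x)" by (rule flow_add[OF v x(1)])
  also have "\<dots> = flow v t x" by (rule flow_sing[OF v flow_S2[OF v x(1)] h])
  finally have "x = flow v t x" .
  then show False using h x(2) by metis
qed

lemma flow_cont_x:
  assumes v: "smooth_vf v"
  shows "continuous_on S2 (\<lambda>x. flow v t x)"
proof -
  obtain L where L: "L > 0" "\<And>a b. a \<in> S2 \<Longrightarrow> b \<in> S2 \<Longrightarrow> norm (v a - v b) \<le> L * norm (a - b)"
    using smooth_vf_lip[OF v] by blast
  define E where "E = exp ((2*L+1) * \<bar>t\<bar>)"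
  have "dist (flow v t x) (flow v t y) \<le> sqrt E * dist x y" if "x \<in> S2" "y \<in> S2" for x y
  proof -
    have bnd: "\<And>a b. a \<in> S2 \<Longrightarrow> b \<in> S2 \<Longrightarrow> norm (v a - v b) \<le> L * norm (a - b) + 0" using L(2) by simp
    have L0: "L \<ge> 0" using L(1) by simp
    have "norm (flow v t x - flow v t y)^2 \<le> exp ((2*L+1) * \<bar>t - 0\<bar>) * (norm (flow v 0 x - flow v 0 y)^2 + 0^2)"
      by (rule sol_gronwall[OF v flow_sol(1)[OF v that(1)] flow_sol(1)[OF v that(2)] L0 order_refl bnd])
    then have "norm (flow v t x - flow v t y)^2 \<le> (sqrt E * norm (x - y))^2"
      using flow_sol(2)[OF v that(1)] flow_sol(2)[OF v that(2)] by (simp add: E_def power_mult_distrib)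
    then have "norm (flow v t x - flow v t y) \<le> sqrt E * norm (x - y)"
      by (rule power2_le_imp_le) (simp add: E_def)
    then show ?thesis by (simp add: dist_norm)
  qed
  then have "(sqrt E)-lipschitz_on S2 (\<lambda>x. flow v t x)" by (intro lipschitz_onI) (auto simp: E_def)
  then show ?thesis by (rule lipschitz_on_continuous_on)
qed

lemma family_vf: "family_star r V \<Longrightarrow> e \<in> ball 0 r \<Longrightarrow> smooth_vf (V e)"
  by (simp add: family_star_def vect_star_def)

lemma family_vf0: "family_star r V \<Longrightarrow> smooth_vf (V 0)"
  using family_vf[of r V 0] by (simp add: family_star_def)

lemma family_unif:
  fixes V :: "real^'n \<Rightarrow> pt \<Rightarrow> pt"
  assumes F: "family_star r V" and eps: "\<epsilon> > 0"
  shows "\<exists>\<rho>>0. \<forall>e. norm e < \<rho> \<longrightarrow> (\<forall>a\<in>S2. norm (V e a - V 0 a) < \<epsilon>)"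
proof -
  have r: "r > 0" using F by (simp add: family_star_def)
  obtain U where U: "ball 0 r \<times> S2 \<subseteq> U" "smooth_on U (\<lambda>(e, x). V e x)"
    using F by (auto simp: family_star_def)
  have c: "continuous_on U (\<lambda>(e, x). V e x)" using U(2) unfolding smooth_on_def
    by (metis Ck_on.simps(1))
  define KS where "KS = cball (0::real^'n) (r/2) \<times> S2"
  have KSU: "KS \<subseteq> U" using U(1) r by (auto simp: KS_def)
  have "compact KS" by (simp add: KS_def compact_Times compact_S2)
  then have "uniformly_continuous_on KS (\<lambda>(e, x). V e x)"
    using compact_uniformly_continuous continuous_on_subset[OF c KSU] by blast
  then obtain d where d: "d > 0" "\<And>p q. p \<in> KS \<Longrightarrow> q \<in> KS \<Longrightarrow> dist q p < d \<Longrightarrow>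
      dist ((\<lambda>(e, x). V e x) q) ((\<lambda>(e, x). V e x) p) < \<epsilon>"
    unfolding uniformly_continuous_on_def using eps by metis
  show ?thesis
  proof (intro exI[of _ "min d (r/2)"] conjI allI impI ballI)
    show "min d (r/2) > 0" using d r by simp
    fix e :: "real^'n" and a assume e: "norm e < min d (r/2)" and a: "a \<in> S2"
    have "(0, a) \<in> KS" "(e, a) \<in> KS" using e a r by (auto simp: KS_def)
    moreover have "dist (e, a) (0, a) < d" using e by (simp add: dist_Pair_Pair)
    ultimately have "dist (V e a) (V 0 a) < \<epsilon>" using d(2) by fastforce
    then show "norm (V e a - V 0 a) < \<epsilon>" by (simp add: dist_norm)
  qed
qed

lemma family_cont:
  fixes V :: "real^'n \<Rightarrow> pt \<Rightarrow> pt"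
  assumes F: "family_star r V" and ek: "ek \<longlonglongrightarrow> 0" "\<And>k. ek k \<in> ball 0 r"
    and xk: "\<And>k. xk k \<in> S2" "xk \<longlonglongrightarrow> x" and x: "x \<in> S2"
  shows "(\<lambda>k. flow (V (ek k)) t (xk k)) \<longlonglongrightarrow> flow (V 0) t x"
proof -
  have v0: "smooth_vf (V 0)" by (rule family_vf0[OF F])
  obtain L where L: "L > 0" "\<And>a b. a \<in> S2 \<Longrightarrow> b \<in> S2 \<Longrightarrow> norm (V 0 a - V 0 b) \<le> L * norm (a - b)"
    using smooth_vf_lip[OF v0] by blast
  define E where "E = exp ((2*L+1) * \<bar>t - 0\<bar>)"
  have E0: "E > 0" by (simp add: E_def)
  define g where "g k = flow (V (ek k)) t (xk k)" for k
  have "(\<lambda>k. norm (g k - flow (V 0) t x)^2) \<longlonglongrightarrow> 0"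
    unfolding lim_sequentially
  proof (intro allI impI)
    fix \<eta> :: real assume \<eta>: "\<eta> > 0"
    define \<epsilon> where "\<epsilon> = sqrt (\<eta> / (4 * E))"
    have \<epsilon>0: "\<epsilon> > 0" using \<eta> E0 by (simp add: \<epsilon>_def)
    have \<epsilon>2: "\<epsilon>^2 = \<eta> / (4 * E)" using \<eta> E0 by (simp add: \<epsilon>_def)
    obtain \<rho> where \<rho>: "\<rho> > 0" "\<And>e. norm e < \<rho> \<Longrightarrow> \<forall>a\<in>S2. norm (V e a - V 0 a) < \<epsilon>"
      using family_unif[OF F \<epsilon>0] by blast
    obtain N1 where N1: "\<And>k. k \<ge> N1 \<Longrightarrow> dist (ek k) 0 < \<rho>" using ek(1) \<rho>(1) unfolding lim_sequentially by blast
    obtain N2 where N2: "\<And>k. k \<ge> N2 \<Longrightarrow> dist (xk k) x < \<epsilon>" using xk(2) \<epsilon>0 unfolding lim_sequentially by blast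
    show "\<exists>no. \<forall>k\<ge>no. dist (norm (g k - flow (V 0) t x)^2) 0 < \<eta>"
    proof (intro exI[of _ "max N1 N2"] allI impI)
      fix k assume k: "max N1 N2 \<le> k"
      have vk: "smooth_vf (V (ek k))" by (rule family_vf[OF F ek(2)])
      have bnd: "norm (V (ek k) a - V 0 b) \<le> L * norm (a - b) + \<epsilon>" if "a \<in> S2" "b \<in> S2" for a b
      proof -
        have "norm (V (ek k) a - V 0 b) \<le> norm (V (ek k) a - V 0 a) + norm (V 0 a - V 0 b)"
          by (rule norm_diff_triangle_le[OF order_refl order_refl])
        moreover have "norm (V (ek k) a - V 0 a) < \<epsilon>" using \<rho>(2)[of "ek k"] N1[of k] k that by auto
        ultimately show ?thesis using L(2)[OF that] by simp
      qed
      have "norm (g k - flow (V 0) t x)^2 \<le> E * (norm (flow (V (ek k)) 0 (xk k) - flow (V 0) 0 x)^2 + \<epsilon>^2)"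
        unfolding g_def E_def
        by (rule sol_gronwall[OF vk flow_sol(1)[OF vk xk(1)] flow_sol(1)[OF v0 x] _ _ bnd]) (use L \<epsilon>0 in auto)
      also have "flow (V (ek k)) 0 (xk k) - flow (V 0) 0 x = xk k - x"
        using flow_sol(2)[OF vk xk(1)] flow_sol(2)[OF v0 x] by simp
      also have "norm (xk k - x)^2 \<le> \<epsilon>^2"
        using N2[of k] k by (intro power_mono) (auto simp: dist_norm)
      then have "E * (norm (xk k - x)^2 + \<epsilon>^2) \<le> E * (\<epsilon>^2 + \<epsilon>^2)" using E0 by simp
      also have "\<dots> = \<eta> / 2" using E0 by (simp add: \<epsilon>2)
      finally have "norm (g k - flow (V 0) t x)^2 \<le> \<eta> / 2" .
      then show "dist (norm (g k - flow (V 0) t x)^2) 0 < \<eta>" using \<eta> by simp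
    qed
  qed
  then have "(\<lambda>k. sqrt (norm (g k - flow (V 0) t x)^2)) \<longlonglongrightarrow> sqrt 0" by (rule tendsto_real_sqrt)
  then have "(\<lambda>k. norm (g k - flow (V 0) t x)) \<longlonglongrightarrow> 0" by simp
  then have "(\<lambda>k. g k - flow (V 0) t x) \<longlonglongrightarrow> 0" by (simp add: tendsto_norm_zero_iff)
  then show ?thesis unfolding g_def by (rule LIM_zero_cancel)
qed

lemma shift_top: "filterlim (ts :: nat \<Rightarrow> real) at_top sequentially \<Longrightarrow> filterlim (\<lambda>n. ts n + c) at_top sequentially"
  using filterlim_tendsto_add_at_top_iff[OF tendsto_const[of c], of ts sequentially]
  by (simp add: add.commute)

lemma shift_bot: "filterlim (ts :: nat \<Rightarrow> real) at_bot sequentially \<Longrightarrow> filterlim (\<lambda>n. ts n + c) at_bot sequentially"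
  using filterlim_tendsto_add_at_bot_iff[OF tendsto_const[of c], of ts sequentially]
  by (simp add: add.commute)

lemma omega_flow:
  assumes v: "smooth_vf v" and x: "x \<in> S2"
  shows "omega_limit v (flow v t x) = omega_limit v x"
proof -
  have fa: "flow v s (flow v t x) = flow v (s + t) x" for s using flow_add[OF v x] by simp
  show ?thesis
  proof
    show "omega_limit v (flow v t x) \<subseteq> omega_limit v x"
    proof
      fix y assume "y \<in> omega_limit v (flow v t x)"
      then obtain ts where "filterlim ts at_top sequentially" "(\<lambda>n. flow v (ts n + t) x) \<longlonglongrightarrow> y"
        by (auto simp: omega_limit_def fa)
      then show "y \<in> omega_limit v x" unfolding omega_limit_def using shift_top by blast
    qed
  next
    show "omega_limit v x \<subseteq> omega_limit v (flow v t x)"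
    proof
      fix y assume "y \<in> omega_limit v x"
      then obtain ts where ts: "filterlim ts at_top sequentially" "(\<lambda>n. flow v (ts n) x) \<longlonglongrightarrow> y"
        by (auto simp: omega_limit_def)
      have "filterlim (\<lambda>n. ts n + - t) at_top sequentially" using shift_top[OF ts(1)] .
      moreover have "(\<lambda>n. flow v ((ts n + - t) + t) x) \<longlonglongrightarrow> y" using ts(2) by simp
      ultimately show "y \<in> omega_limit v (flow v t x)" unfolding omega_limit_def fa by blast
    qed
  qed
qed

lemma alpha_flow:
  assumes v: "smooth_vf v" and x: "x \<in> S2"
  shows "alpha_limit v (flow v t x) = alpha_limit v x"
proof -
  have fa: "flow v s (flow v t x) = flow v (s + t) x" for s using flow_add[OF v x] by simp
  show ?thesis
  proof
    show "alpha_limit v (flow v t x) \<subseteq> alpha_limit v x"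
    proof
      fix y assume "y \<in> alpha_limit v (flow v t x)"
      then obtain ts where "filterlim ts at_bot sequentially" "(\<lambda>n. flow v (ts n + t) x) \<longlonglongrightarrow> y"
        by (auto simp: alpha_limit_def fa)
      then show "y \<in> alpha_limit v x" unfolding alpha_limit_def using shift_bot by blast
    qed
  next
    show "alpha_limit v x \<subseteq> alpha_limit v (flow v t x)"
    proof
      fix y assume "y \<in> alpha_limit v x"
      then obtain ts where ts: "filterlim ts at_bot sequentially" "(\<lambda>n. flow v (ts n) x) \<longlonglongrightarrow> y"
        by (auto simp: alpha_limit_def)
      have "filterlim (\<lambda>n. ts n + - t) at_bot sequentially" using shift_bot[OF ts(1)] .
      moreover have "(\<lambda>n. flow v ((ts n + - t) + t) x) \<longlonglongrightarrow> y" using ts(2) by simp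
      ultimately show "y \<in> alpha_limit v (flow v t x)" unfolding alpha_limit_def fa by blast
    qed
  qed
qed

lemma orbit_inv:
  assumes v: "smooth_vf v" and z: "z \<in> S2" and y: "y \<in> orbit v z"
  shows "flow v t y \<in> orbit v z" "y \<in> S2"
proof -
  obtain s where s: "y = flow v s z" using y by (auto simp: orbit_def)
  have "flow v t y = flow v (t + s) z" using flow_add[OF v z] s by simp
  then show "flow v t y \<in> orbit v z" by (simp add: orbit_def)
  show "y \<in> S2" using s flow_S2[OF v z] by simp
qed

lemma cycle_props:
  assumes v: "smooth_vf v" and C: "cycle v C"
  shows "C \<subseteq> S2" "\<And>y t. y \<in> C \<Longrightarrow> flow v t y \<in> C"
  using C orbit_inv[OF v] unfolding cycle_def by blast+

lemma periodic_nat: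
  assumes v: "smooth_vf v" and x: "x \<in> S2" and T: "flow v T x = x"
  shows "flow v (s + real n * T) x = flow v s x"
proof (induction n)
  case (Suc n)
  have "flow v (s + real (Suc n) * T) x = flow v ((s + real n * T) + T) x" by (simp add: algebra_simps)
  also have "\<dots> = flow v (s + real n * T) (flow v T x)" by (rule flow_add[OF v x])
  also have "\<dots> = flow v s x" using Suc T by simp
  finally show ?case .
qed simp

lemma cycle_closed:
  assumes v: "smooth_vf v" and C: "cycle v C"
  shows "closed C"
proof -
  obtain x T where x: "x \<in> S2" and T: "T > 0" "flow v T x = x" and Ceq: "C = orbit v x"
    using C by (auto simp: cycle_def)
  have "C = (\<lambda>s. flow v s x) ` {0..T}"
  proof
    show "(\<lambda>s. flow v s x) ` {0..T} \<subseteq> C" by (auto simp: Ceq orbit_def)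
  next
    show "C \<subseteq> (\<lambda>s. flow v s x) ` {0..T}"
    proof
      fix y assume "y \<in> C"
      then obtain s where y: "y = flow v s x" by (auto simp: Ceq orbit_def)
      define k where "k = \<lfloor>s / T\<rfloor>"
      define r where "r = s - real_of_int k * T"
      have k1: "real_of_int k \<le> s / T" "s / T < real_of_int k + 1" by (auto simp: k_def)
      have "real_of_int k * T \<le> s" using k1(1) T(1) by (simp add: pos_le_divide_eq)
      moreover have "s < (real_of_int k + 1) * T" using k1(2) T(1) by (simp add: pos_divide_less_eq)
      ultimately have r: "0 \<le> r" "r \<le> T" by (auto simp: r_def algebra_simps)
      have "flow v r x = flow v s x"
      proof (cases "k \<ge> 0")
        case True
        have "flow v s x = flow v (r + real (nat k) * T) x" using True by (simp add: r_def)
        also have "\<dots> = flow v r x" by (rule periodic_nat[OF v x T(2)])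
        finally show ?thesis by simp
      next
        case False
        have "flow v r x = flow v (s + real (nat (-k)) * T) x" using False by (simp add: r_def)
        also have "\<dots> = flow v s x" by (rule periodic_nat[OF v x T(2)])
        finally show ?thesis .
      qed
      moreover have "r \<in> {0..T}" using r by simp
      ultimately show "y \<in> (\<lambda>s. flow v s x) ` {0..T}" using y by (metis rev_image_eqI)
    qed
  qed
  moreover have "compact ((\<lambda>s. flow v s x) ` {0..T})"
    by (rule compact_continuous_image[OF continuous_on_subset[OF flow_cont_t[OF v x]]]) auto
  ultimately show ?thesis by (simp add: compact_imp_closed)
qed

lemma sing_closed: "smooth_vf v \<Longrightarrow> closed (sing v)"
  unfolding sing_def by (rule continuous_closed_preimage_constant[OF smooth_vf_cont closed_S2])

lemma sing_finite:
  assumes vs: "vect_star v" shows "finite (sing v)"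
proof (rule ccontr)
  assume inf: "infinite (sing v)"
  have v: "smooth_vf v" using vs by (simp add: vect_star_def)
  have "sing v \<subseteq> S2" by (auto simp: sing_def)
  then obtain x where x: "x \<in> S2" "x islimpt sing v"
    using compact_eq_Bolzano_Weierstrass[of S2] compact_S2 inf by blast
  then have xs: "x \<in> sing v" using sing_closed[OF v] closed_limpt by blast
  then obtain d where d: "d > 0" "\<And>q. q \<in> sing v \<Longrightarrow> dist q x < d \<Longrightarrow> q = x"
    using vs by (auto simp: vect_star_def isolated_sing_def)
  from x(2) d(1) obtain q where "q \<in> sing v" "q \<noteq> x" "dist q x < d"
    unfolding islimpt_approachable by blast
  with d(2) show False by blast
qed

lemma clos_family:
  fixes V :: "real^'n \<Rightarrow> pt \<Rightarrow> pt"
  assumes F: "family_star r V"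
    and X: "\<And>e x t. (e, x) \<in> X \<Longrightarrow> e \<in> ball 0 r \<and> x \<in> S2 \<and> (e, flow (V e) t x) \<in> X"
    and y: "(0, y) \<in> closure X" "y \<in> S2"
  shows "(0, flow (V 0) t y) \<in> closure X"
proof -
  obtain s where s: "\<And>n. s n \<in> X" "s \<longlonglongrightarrow> (0, y)" using y(1) closure_sequential by metis
  define ek where "ek = (\<lambda>n. fst (s n))"
  define xk where "xk = (\<lambda>n. snd (s n))"
  have sn: "s n = (ek n, xk n)" for n by (simp add: ek_def xk_def)
  have ek: "ek \<longlonglongrightarrow> 0" using tendsto_fst[OF s(2)] by (simp add: ek_def)
  have xk: "xk \<longlonglongrightarrow> y" using tendsto_snd[OF s(2)] by (simp add: xk_def)
  have P: "ek n \<in> ball 0 r \<and> xk n \<in> S2 \<and> (ek n, flow (V (ek n)) t (xk n)) \<in> X" for n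
    using X[of "ek n" "xk n" t] s(1)[of n] by (simp add: sn)
  have "(\<lambda>k. flow (V (ek k)) t (xk k)) \<longlonglongrightarrow> flow (V 0) t y"
    by (rule family_cont[OF F ek _ _ xk y(2)]) (use P in auto)
  then have "(\<lambda>k. (ek k, flow (V (ek k)) t (xk k))) \<longlonglongrightarrow> (0, flow (V 0) t y)"
    using ek by (intro tendsto_Pair)
  then show ?thesis using P closure_sequential by fastforce
qed

lemma PerF_prop:
  fixes V :: "real^'n \<Rightarrow> pt \<Rightarrow> pt"
  assumes F: "family_star r V" and ex: "(e, x) \<in> PerF r V"
  shows "e \<in> ball 0 r \<and> x \<in> S2 \<and> (e, flow (V e) t x) \<in> PerF r V"
proof -
  from ex obtain C where e: "e \<in> ball 0 r" and C: "limit_cycle (V e) C" "x \<in> C" by (auto simp: PerF_def)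
  have v: "smooth_vf (V e)" by (rule family_vf[OF F e])
  have cy: "cycle (V e) C" using C by (simp add: limit_cycle_def)
  show ?thesis using e C cycle_props[OF v cy] by (auto simp: PerF_def)
qed

lemma SepF_prop:
  fixes V :: "real^'n \<Rightarrow> pt \<Rightarrow> pt"
  assumes F: "family_star r V" and ex: "(e, x) \<in> SepF r V"
  shows "e \<in> ball 0 r \<and> x \<in> S2 \<and> (e, flow (V e) t x) \<in> SepF r V"
proof -
  from ex have e: "e \<in> ball 0 r" and xs: "x \<in> Sep (V e)" by (auto simp: SepF_def)
  from xs obtain z where z: "x \<in> orbit (V e) z" "\<exists>p y. hyp_sector (V e) p z y \<or> hyp_sector (V e) p y z"
    by (auto simp: Sep_def)
  have zS: "z \<in> S2" using z(2) by (auto simp: hyp_sector_def)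
  have v: "smooth_vf (V e)" by (rule family_vf[OF F e])
  have "flow (V e) t x \<in> orbit (V e) z" "x \<in> S2" using orbit_inv[OF v zS z(1)] by auto
  moreover have "flow (V e) t x \<in> Sep (V e)" using calculation(1) z(2) by (auto simp: Sep_def)
  ultimately show ?thesis using e by (auto simp: SepF_def)
qed

theorem mainTheorem5:
  fixes V :: "real^'n \<Rightarrow> pt \<Rightarrow> pt" and r :: real
  assumes "family_star r V"
  shows "closed (ELBS (V 0)) \<and> invariant (V 0) (ELBS (V 0)) \<and>
         closed (LBS r V) \<and> invariant (V 0) (LBS r V)"
proof -
  note F = assms
  define v where "v = V 0"
  have r: "r > 0" using F by (simp add: family_star_def)
  have vs: "vect_star v" using F r by (simp add: family_star_def v_def)
  have v: "smooth_vf v" using vs by (simp add: vect_star_def)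
  define A where "A = {x \<in> S2. v x \<noteq> 0 \<and> \<not> noninteresting_alpha v x \<and> \<not> noninteresting_omega v x}"
  define P1 where "P1 = {p \<in> sing v. \<not> hyp_sing v p}"
  define P2 where "P2 = \<Union>{C. limit_cycle v C \<and> \<not> hyp_cycle v C}"
  have Eeq: "ELBS v = P1 \<union> P2 \<union> closure A" by (simp add: ELBS_def A_def P1_def P2_def)
  have cP1: "closed P1"
    by (rule finite_imp_closed, rule finite_subset[OF _ sing_finite[OF vs]]) (auto simp: P1_def)
  have fin: "finite {C. limit_cycle v C \<and> \<not> hyp_cycle v C}"
    by (rule finite_subset[of _ "{C. cycle v C}"]) (use vs in \<open>auto simp: limit_cycle_def vect_star_def\<close>)
  have cP2: "closed P2" unfolding P2_def
    by (rule closed_Union[OF fin]) (auto simp: limit_cycle_def intro: cycle_closed[OF v])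
  have cE: "closed (ELBS v)" unfolding Eeq using cP1 cP2 by auto
  have AS2: "A \<subseteq> S2" by (auto simp: A_def)
  have clS2: "closure A \<subseteq> S2" by (rule closure_minimal[OF AS2 closed_S2])
  have Ainv: "flow v t a \<in> A" if a: "a \<in> A" for a t
  proof -
    have aS: "a \<in> S2" using a by (simp add: A_def)
    have "noninteresting_alpha v (flow v t a) = noninteresting_alpha v a"
      by (simp add: noninteresting_alpha_def alpha_flow[OF v aS])
    moreover have "noninteresting_omega v (flow v t a) = noninteresting_omega v a"
      by (simp add: noninteresting_omega_def omega_flow[OF v aS])
    ultimately show ?thesis using a flow_S2[OF v aS] flow_nonsing[OF v aS] by (auto simp: A_def)
  qed
  have clinv: "flow v t y \<in> closure A" if y: "y \<in> closure A" for y t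
  proof -
    obtain a where a: "\<And>n. a n \<in> A" "a \<longlonglongrightarrow> y" using y closure_sequential by metis
    have yS: "y \<in> S2" using y clS2 by auto
    have "(\<lambda>n. flow v t (a n)) \<longlonglongrightarrow> flow v t y"
      by (rule continuous_on_tendsto_compose[OF flow_cont_x[OF v] a(2) yS]) (use a(1) AS2 in \<open>auto intro!: always_eventually\<close>)
    then show ?thesis using Ainv[OF a(1)] closure_sequential by fastforce
  qed
  have ES2: "ELBS v \<subseteq> S2"
    unfolding Eeq using clS2 cycle_props(1)[OF v]
    by (auto simp: P1_def P2_def sing_def limit_cycle_def)
  have Einv: "flow v t y \<in> ELBS v" if y: "y \<in> ELBS v" for y t
  proof -
    consider "y \<in> P1" | "y \<in> P2" | "y \<in> closure A" using y Eeq by auto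
    then show ?thesis
    proof cases
      case 1
      then have "flow v t y = y" using flow_sing[OF v] by (auto simp: P1_def sing_def)
      then show ?thesis using y by simp
    next
      case 2
      then obtain C where C: "limit_cycle v C" "\<not> hyp_cycle v C" "y \<in> C" by (auto simp: P2_def)
      then have "flow v t y \<in> C" using cycle_props(2)[OF v] by (auto simp: limit_cycle_def)
      then have "flow v t y \<in> P2" using C by (auto simp: P2_def)
      then show ?thesis using Eeq by auto
    next
      case 3
      then show ?thesis using clinv Eeq by auto
    qed
  qed
  have invE: "invariant v (ELBS v)" using ES2 Einv by (auto simp: invariant_def)
  define Cl where "Cl = closure (PerF r V) \<union> closure (SepF r V)"
  have Leq: "LBS r V = ELBS v \<inter> (sing v \<union> (\<lambda>x. (0, x)) -` Cl)"
    by (auto simp: LBS_def Cl_def v_def)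
  have cL: "closed (LBS r V)" unfolding Leq
    by (intro closed_Int cE closed_Un sing_closed[OF v] continuous_closed_vimage)
       (auto simp: Cl_def intro!: continuous_intros)
  have invL: "invariant v (LBS r V)"
    unfolding invariant_def
  proof (intro conjI ballI allI)
    show "LBS r V \<subseteq> S2" using ES2 Leq by auto
    fix y t assume y: "y \<in> LBS r V"
    then have yE: "y \<in> ELBS v" and yS: "y \<in> S2" using Leq ES2 by auto
    have "flow v t y \<in> sing v \<union> (\<lambda>x. (0, x)) -` Cl"
    proof (cases "y \<in> sing v")
      case True
      then show ?thesis using flow_sing[OF v] by (auto simp: sing_def)
    next
      case False
      then have "(0, y) \<in> closure (PerF r V) \<or> (0, y) \<in> closure (SepF r V)" using y Leq Cl_def by auto
      then show ?thesis
      proof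
        assume "(0, y) \<in> closure (PerF r V)"
        then have "(0, flow (V 0) t y) \<in> closure (PerF r V)"
        proof -
          have X: "\<And>e x t. (e, x) \<in> PerF r V \<Longrightarrow> e \<in> ball 0 r \<and> x \<in> S2 \<and> (e, flow (V e) t x) \<in> PerF r V"
            using PerF_prop[OF F] by blast
          show ?thesis by (rule clos_family[OF F X \<open>(0, y) \<in> closure (PerF r V)\<close> yS])
        qed
        then show ?thesis by (simp add: Cl_def v_def)
      next
        assume "(0, y) \<in> closure (SepF r V)"
        then have "(0, flow (V 0) t y) \<in> closure (SepF r V)"
        proof -
          have X: "\<And>e x t. (e, x) \<in> SepF r V \<Longrightarrow> e \<in> ball 0 r \<and> x \<in> S2 \<and> (e, flow (V e) t x) \<in> SepF r V"
            using SepF_prop[OF F] by blast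
          show ?thesis by (rule clos_family[OF F X \<open>(0, y) \<in> closure (SepF r V)\<close> yS])
        qed
        then show ?thesis by (simp add: Cl_def v_def)
      qed
    qed
    then show "flow v t y \<in> LBS r V" using Einv[OF yE] Leq by auto
  qed
  show ?thesis using cE invE cL invL by (simp add: v_def)
qed

end
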